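(* For $k=1,\dots,5$ let $F_k(s)=C_k(sI-A_k)^{-1}B_k$ be strictly proper transfer functions with complex matrices of compatible dimensions and $A_k$ Hurwitz. Let $Q_{12},P_{23},Q_{34},P_{45}$ be the unique solutions of $$A_1^*Q_{12}+Q_{12}A_2+C_1^*C_2=0,\quad A_2P_{23}+P_{23}A_3^*+B_2B_3^*=0,$$ $$A_3^*Q_{34}+Q_{34}A_4+C_3^*C_4=0,\quad A_4P_{45}+P_{45}A_5^*+B_4B_5^*=0,$$ and let $Q_{14},P_{25}$ be the unique solutions of $$A_1^*Q_{14}+Q_{14}A_4+Q_{12}P_{23}C_3^*C_4+C_1^*C_2P_{23}Q_{34}=0,\qquad A_2P_{25}+P_{25}A_5^*+P_{23}C_3^*C_4P_{45}=0 .$$ Then $$\mathbf M(F_1,\dots,F_5):=\frac1{2\pi}\int_{\mathbb R}F_1(i\lambda)^*F_2(i\lambda)F_3(i\lambda)^*F_4(i\lambda)F_5(i\lambda)^*\,d\lambda=B_1^*\big(Q_{12}P_{25}+Q_{14}P_{45}\big)C_5^* .$$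
   Context: $(\cdot)^*$ is the conjugate transpose; dimensions are such that all products above are defined. *)

theory Defs
  imports "HOL-Analysis.Analysis"
begin

definition cadj :: "complex^'n^'m \<Rightarrow> complex^'m^'n" where
  "cadj A = (\<chi> i j. cnj (A $ j $ i))"

definition hurwitz :: "complex^'n^'n \<Rightarrow> bool" where
  "hurwitz A \<longleftrightarrow> (\<forall>\<mu> v. v \<noteq> 0 \<and> A *v v = \<mu> *s v \<longrightarrow> Re \<mu> < 0)"

definition tf :: "complex^'n^'p \<Rightarrow> complex^'n^'n \<Rightarrow> complex^'m^'n \<Rightarrow> complex \<Rightarrow> complex^'m^'p" where
  "tf C A B s = C ** matrix_inv (mat s - A) ** B"

end

theory Submission
  imports Defs "HOL-Complex_Analysis.Complex_Analysis" "HOL-Probability.Sinc_Integral"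
begin

unbundle no fps_syntax


lemma core_scalar:
  fixes g :: "complex \<Rightarrow> complex"
  assumes cont: "continuous_on {z. Re z \<ge> 0} g"
    and diff: "\<And>z. Re z > 0 \<Longrightarrow> g field_differentiable at z"
    and bnd: "\<And>z. Re z \<ge> 0 \<Longrightarrow> cmod (g z) * (cmod z)^2 \<le> M"
  shows "((\<lambda>T. integral {-T..T} (\<lambda>t. g (\<i> * of_real t))) \<longlongrightarrow> 0) at_top"
proof -
  define S where "S = {z. Re z \<ge> 0}"
  have M0: "M \<ge> 0" using bnd[of 0] by simp
  have key: "norm (integral {-T..T} (\<lambda>t. g (\<i> * of_real t))) \<le> M * pi / T" if T: "T > 0" for T
  proof -
    define arc where "arc = part_circlepath 0 T (-pi/2) (pi/2)"
    define ln where "ln = linepath (\<i> * of_real T) (- \<i> * of_real T)"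
    have arcS: "path_image arc \<subseteq> S"
    proof
      fix w assume "w \<in> path_image arc"
      then obtain x where x: "-pi/2 \<le> x" "x \<le> pi/2" "w = T * exp(\<i> * of_real x)"
        unfolding arc_def by (auto simp: path_image_part_circlepath)
      have "cos x \<ge> 0" using x by (intro cos_ge_zero) auto
      then show "w \<in> S" using x T by (simp add: S_def Re_exp)
    qed
    have lnS: "path_image ln \<subseteq> S"
      unfolding ln_def S_def
      by (auto simp: closed_segment_def) 
    have cS: "convex S" unfolding S_def using convex_halfspace_Re_ge[of 0] by simp
    have intS: "interior S = {z. Re z > 0}" unfolding S_def
      using interior_halfspace_ge[of "1::complex" 0] by simp
    have e1: "exp (\<i> * complex_of_real pi / 2) = \<i>"
      using cis_pi_half by (simp add: cis_conv_exp mult.commute)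
    have e2: "exp (- (\<i> * complex_of_real pi / 2)) = - \<i>"
      using cis_pi_half cis_inverse[of "pi/2"] by (simp add: cis_conv_exp mult.commute exp_minus)
    have st: "pathfinish arc = pathstart ln" "pathfinish ln = pathstart arc"
      by (auto simp: arc_def ln_def e1 e2)
    have "(g has_contour_integral 0) (arc +++ ln)"
      apply (rule Cauchy_theorem_convex[of S g "{}"])
      using cont diff cS arcS lnS st intS unfolding S_def[symmetric]
      by (auto simp: path_image_join valid_path_join arc_def ln_def)
    have ia: "g contour_integrable_on arc" unfolding arc_def
      by (rule contour_integrable_continuous_part_circlepath)
         (rule continuous_on_subset[OF cont], use arcS in \<open>auto simp: S_def arc_def\<close>)
    have il: "g contour_integrable_on ln" unfolding ln_def
      by (rule contour_integrable_continuous_linepath)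
         (rule continuous_on_subset[OF cont], use lnS in \<open>auto simp: S_def ln_def\<close>)
    have "(g has_contour_integral 0) (arc +++ ln)"
      apply (rule Cauchy_theorem_convex[of S g "{}"])
      using cont diff cS arcS lnS st intS unfolding S_def[symmetric]
      by (auto simp: path_image_join valid_path_join arc_def ln_def)
    then have sum0: "contour_integral arc g + contour_integral ln g = 0"
      using contour_integral_join[OF ia il] st contour_integral_unique
      by (metis arc_def ln_def valid_path_linepath valid_path_part_circlepath)
    have "contour_integral ln g = - contour_integral (linepath (- \<i> * of_real T) (\<i> * of_real T)) g"
      unfolding ln_def
      by (metis contour_integral_reversepath reversepath_linepath valid_path_linepath)
    also have "contour_integral (linepath (- \<i> * of_real T) (\<i> * of_real T)) g
        = \<i> * integral {-T..T} (\<lambda>x. g (Complex 0 x))"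
      by (rule contour_integral_linepath_same_Re) (use T in auto)
    also have "(\<lambda>x. g (Complex 0 x)) = (\<lambda>t. g (\<i> * of_real t))"
      by (simp add: Complex_eq)
    finally have "contour_integral arc g = \<i> * integral {-T..T} (\<lambda>t. g (\<i> * of_real t))"
      using sum0 by (simp add: algebra_simps)
    then have "norm (integral {-T..T} (\<lambda>t. g (\<i> * of_real t))) = norm (contour_integral arc g)"
      by (simp add: norm_mult)
    also have "\<dots> \<le> (M / T^2) * T * (pi/2 - (-pi/2))"
    proof (rule has_contour_integral_bound_part_circlepath[of g _ 0 T "-pi/2" "pi/2"])
      show "(g has_contour_integral contour_integral arc g) (part_circlepath 0 T (- pi / 2) (pi / 2))"
        using ia has_contour_integral_integral arc_def by blast
      show "0 \<le> M / T^2" using M0 by simp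
      fix x assume x: "x \<in> path_image (part_circlepath 0 T (- pi / 2) (pi / 2))"
      then have "cmod x = T" using in_path_image_part_circlepath[OF x] T by simp
      moreover have "Re x \<ge> 0" using x arcS by (auto simp: arc_def S_def)
      ultimately show "cmod (g x) \<le> M / T^2" using bnd[of x] T
        by (simp add: field_simps)
    qed (use T in auto)
    also have "\<dots> = M * pi / T" using T by (simp add: field_simps power2_eq_square)
    finally show ?thesis .
  qed
  show ?thesis
  proof (rule Lim_null_comparison)
    show "\<forall>\<^sub>F T in at_top. norm (integral {-T..T} (\<lambda>t. g (\<i> * of_real t))) \<le> M * pi / T"
      using eventually_gt_at_top[of 0] by eventually_elim (use key in auto)
    show "((\<lambda>T. M * pi / T) \<longlongrightarrow> 0) at_top"
      by (intro tendsto_divide_0[OF tendsto_const] filterlim_at_top_imp_at_infinity filterlim_ident)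
  qed
qed


lemma mm_rdistrib: "((A::'a::semiring_1^'n^'m) + B) ** C = A ** C + B ** C"
  by (vector matrix_matrix_mult_def sum.distrib[symmetric] field_simps)

lemma decomp:
  fixes a1 :: "complex^'n1^'n1" and r2 :: "complex^'n2^'n2" and a3 :: "complex^'n3^'n3"
    and r4 :: "complex^'n4^'n4" and a5 :: "complex^'n5^'n5"
    and N1 Q12 :: "complex^'n2^'n1" and N2 P23 :: "complex^'n3^'n2" and N3 Q34 :: "complex^'n4^'n3"
    and N4 P45 :: "complex^'n5^'n4" and Q14 :: "complex^'n4^'n1" and P25 :: "complex^'n5^'n2"
  assumes E12: "a1 ** N1 ** r2 = Q12 ** r2 + a1 ** Q12"
    and E23: "r2 ** N2 ** a3 = P23 ** a3 + r2 ** P23"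
    and E34: "a3 ** N3 ** r4 = Q34 ** r4 + a3 ** Q34"
    and E45: "r4 ** N4 ** a5 = P45 ** a5 + r4 ** P45"
    and E14: "a1 ** (Q12 ** P23 ** N3 + N1 ** P23 ** Q34) ** r4 = Q14 ** r4 + a1 ** Q14"
    and E25: "r2 ** (P23 ** N3 ** P45) ** a5 = P25 ** a5 + r2 ** P25"
  shows "a1 ** N1 ** r2 ** N2 ** a3 ** N3 ** r4 ** N4 ** a5 =
     a1 ** N1 ** P23 ** a3 ** Q34 ** N4 ** a5 + a1 ** Q14 ** N4 ** a5
   + Q14 ** P45 ** a5 + Q14 ** r4 ** P45 + Q12 ** r2 ** P23 ** N3 ** r4 ** P45
   + Q12 ** P25 ** a5 + Q12 ** r2 ** P25"
proof -
  note as = matrix_mul_assoc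
  note dl = matrix_add_ldistrib
  note dr = mm_rdistrib
  have "a1 ** N1 ** r2 ** N2 ** a3 ** N3 ** r4 ** N4 ** a5
      = a1 ** N1 ** (r2 ** N2 ** a3) ** N3 ** r4 ** N4 ** a5" by (simp add: as)
  also have "\<dots> = a1 ** N1 ** P23 ** (a3 ** N3 ** r4) ** N4 ** a5
                 + (a1 ** N1 ** r2) ** P23 ** N3 ** r4 ** N4 ** a5"
    by (simp add: E23 dl dr as)
  also have "\<dots> = a1 ** (Q12 ** P23 ** N3 + N1 ** P23 ** Q34) ** r4 ** N4 ** a5
      + a1 ** N1 ** P23 ** a3 ** Q34 ** N4 ** a5 + Q12 ** r2 ** P23 ** N3 ** (r4 ** N4 ** a5)"
    by (simp add: E34 E12 dl dr as algebra_simps)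
  also have "\<dots> = (Q14 ** r4 + a1 ** Q14) ** N4 ** a5
      + a1 ** N1 ** P23 ** a3 ** Q34 ** N4 ** a5 + Q12 ** r2 ** P23 ** N3 ** (P45 ** a5 + r4 ** P45)"
    by (simp only: E14 E45)
  also have "\<dots> = Q14 ** (r4 ** N4 ** a5) + a1 ** Q14 ** N4 ** a5
      + a1 ** N1 ** P23 ** a3 ** Q34 ** N4 ** a5 + Q12 ** (r2 ** (P23 ** N3 ** P45) ** a5)
      + Q12 ** r2 ** P23 ** N3 ** r4 ** P45"
    by (simp add: dl dr as algebra_simps)
  also have "\<dots> = Q14 ** (P45 ** a5 + r4 ** P45) + a1 ** Q14 ** N4 ** a5
      + a1 ** N1 ** P23 ** a3 ** Q34 ** N4 ** a5 + Q12 ** (P25 ** a5 + r2 ** P25)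
      + Q12 ** r2 ** P23 ** N3 ** r4 ** P45"
    by (simp only: E45 E25)
  also have "\<dots> = a1 ** N1 ** P23 ** a3 ** Q34 ** N4 ** a5 + a1 ** Q14 ** N4 ** a5
   + Q14 ** P45 ** a5 + Q14 ** r4 ** P45 + Q12 ** r2 ** P23 ** N3 ** r4 ** P45
   + Q12 ** P25 ** a5 + Q12 ** r2 ** P25"
    by (simp add: dl dr as algebra_simps)
  finally show ?thesis .
qed




lemma cadj_nth [simp]: "cadj A $ i $ j = cnj (A $ j $ i)"
  by (simp add: cadj_def)

lemma cadj_mult: "cadj ((A::complex^'n^'m) ** B) = cadj B ** cadj A"
  by (simp add: vec_eq_iff matrix_matrix_mult_def mult.commute)

lemma cadj_cadj [simp]: "cadj (cadj A) = A"
  by (simp add: vec_eq_iff)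

lemma cadj_add: "cadj (A + B) = cadj A + cadj B"
  by (simp add: vec_eq_iff)

lemma cadj_diff: "cadj (A - B) = cadj A - cadj B"
  by (simp add: vec_eq_iff)

lemma cadj_mat: "cadj (mat c :: complex^'n^'n) = mat (cnj c)"
  by (simp add: vec_eq_iff mat_def)

lemma cadj_zero [simp]: "cadj 0 = 0"
  by (simp add: vec_eq_iff)

lemma cadj_scaleR: "cadj (r *\<^sub>R A) = r *\<^sub>R cadj A"
  by (simp add: vec_eq_iff)

lemma norm_sq_mat: "(norm (A::complex^'n^'m))^2 = (\<Sum>i\<in>UNIV. \<Sum>j\<in>UNIV. (cmod (A$i$j))^2)"
  by (simp add: norm_vec_def L2_set_def sum_nonneg)

lemma norm_cadj [simp]: "norm (cadj A) = norm A"
proof -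
  have "(norm (cadj A))^2 = (norm A)^2"
    unfolding norm_sq_mat by (simp, subst sum.swap, simp)
  then show ?thesis by (simp add: power2_eq_iff_nonneg)
qed

lemma bounded_linear_cadj: "bounded_linear cadj"
  by (rule bounded_linear_intro[where K=1]) (auto simp: cadj_add cadj_scaleR)

lemma mat_mult_nth: "(mat c ** X) $ i $ j = c * X $ i $ j"
  by (simp add: matrix_matrix_mult_def mat_def if_distrib if_distribR sum.delta cong: if_cong)

lemma mult_mat_nth: "((X::complex^'n^'m) ** mat c) $ i $ j = c * X $ i $ j"
proof -
  have "(X ** mat c) $ i $ j = X $ i $ j * c"
    by (simp add: matrix_matrix_mult_def mat_def if_distrib if_distribR sum.delta' cong: if_cong)
  then show ?thesis by (simp add: mult.commute)
qed

lemma matrix_sub_ldistrib: "(A::'a::ring_1^'n^'m) ** (B - C) = A ** B - A ** C"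
  by (vector matrix_matrix_mult_def sum_subtractf[symmetric] field_simps)

lemma matrix_sub_rdistrib: "((A::'a::ring_1^'n^'m) - B) ** C = A ** C - B ** C"
  by (vector matrix_matrix_mult_def sum_subtractf[symmetric] field_simps)

lemma inv_props:
  assumes "invertible (M::'a::semiring_1^'n^'m)"
  shows "M ** matrix_inv M = mat 1" "matrix_inv M ** M = mat 1"
  using someI_ex[OF assms[unfolded invertible_def]] unfolding matrix_inv_def by auto

definition res :: "complex^'n^'n \<Rightarrow> complex \<Rightarrow> complex^'n^'n" where
  "res A z = matrix_inv (mat z - A)"

lemma hurwitz_invertible:
  assumes "hurwitz A" "0 \<le> Re z"
  shows "invertible (mat z - A)"
proof (rule ccontr)
  assume ni: "\<not> invertible (mat z - A)"
  then have "\<not> (\<forall>x. (mat z - A) *v x = 0 \<longrightarrow> x = 0)"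
    using invertible_left_inverse matrix_left_invertible_ker by blast
  then obtain v where v: "(mat z - A) *v v = 0" "v \<noteq> 0" by blast
  have "mat z *v v = z *s v"
    by (simp add: vec_eq_iff matrix_vector_mult_def mat_def if_distrib if_distribR sum.delta cong: if_cong)
  then have "A *v v = z *s v" using v(1) by (simp add: matrix_vector_mult_diff_rdistrib)
  then have "Re z < 0" using assms(1) v(2) unfolding hurwitz_def by blast
  then show False using assms(2) by simp
qed

lemma res_props:
  assumes "hurwitz A" "0 \<le> Re z"
  shows "(mat z - A) ** res A z = mat 1" "res A z ** (mat z - A) = mat 1"
  using inv_props[OF hurwitz_invertible[OF assms]] unfolding res_def by auto

lemma sandwich:
  assumes "X ** Y = mat 1" "Z ** W = mat 1"
  shows "X ** (Y ** Q + Q ** Z) ** W = Q ** W + X ** (Q::complex^'b^'a)"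
proof -
  have "X ** (Y ** Q + Q ** Z) ** W = (X ** Y) ** Q ** W + X ** Q ** (Z ** W)"
    by (simp add: matrix_add_ldistrib mm_rdistrib matrix_mul_assoc)
  then show ?thesis using assms by simp
qed

lemma ident_Q:
  assumes ha: "hurwitz Aa" and hb: "hurwitz Ab" and s: "Re s = 0"
    and eq: "cadj Aa ** Q + Q ** Ab + N = 0"
  shows "cadj (res Aa s) ** N ** res Ab s = Q ** res Ab s + cadj (res Aa s) ** Q"
proof -
  have cs: "cnj s = - s" using s by (simp add: complex_eq_iff)
  have N: "N = cadj (mat s - Aa) ** Q + Q ** (mat s - Ab)"
  proof -
    have "cadj (mat s - Aa) ** Q + Q ** (mat s - Ab)
        = (mat (-s) ** Q + Q ** mat s) - (cadj Aa ** Q + Q ** Ab)"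
      by (simp add: cadj_diff cadj_mat cs matrix_add_ldistrib mm_rdistrib algebra_simps
          matrix_sub_ldistrib matrix_sub_rdistrib)
    also have "mat (-s) ** Q + Q ** mat s = 0"
      by (simp add: vec_eq_iff mat_mult_nth mult_mat_nth)
    finally have c: "cadj (mat s - Aa) ** Q + Q ** (mat s - Ab) = 0 - (cadj Aa ** Q + Q ** Ab)" by simp
    have "N = 0 - (cadj Aa ** Q + Q ** Ab)" unfolding eq_diff_eq using eq by (simp add: add.commute)
    then show ?thesis using c by simp
  qed
  have 1: "cadj (res Aa s) ** cadj (mat s - Aa) = mat 1"
    using res_props(1)[OF ha, of s] s by (simp add: cadj_mult[symmetric] cadj_mat)
  have 2: "(mat s - Ab) ** res Ab s = mat 1" using res_props(1)[OF hb, of s] s by simp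
  show ?thesis unfolding N using sandwich[OF 1 2] .
qed

lemma ident_P:
  assumes ha: "hurwitz Aa" and hb: "hurwitz Ab" and s: "Re s = 0"
    and eq: "Aa ** P + P ** cadj Ab + N = 0"
  shows "res Aa s ** N ** cadj (res Ab s) = P ** cadj (res Ab s) + res Aa s ** P"
proof -
  have cs: "cnj s = - s" using s by (simp add: complex_eq_iff)
  have N: "N = (mat s - Aa) ** P + P ** cadj (mat s - Ab)"
  proof -
    have "(mat s - Aa) ** P + P ** cadj (mat s - Ab)
        = (mat s ** P + P ** mat (-s)) - (Aa ** P + P ** cadj Ab)"
      by (simp add: cadj_diff cadj_mat cs matrix_add_ldistrib mm_rdistrib algebra_simps
          matrix_sub_ldistrib matrix_sub_rdistrib)
    also have "mat s ** P + P ** mat (-s) = 0"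
      by (simp add: vec_eq_iff mat_mult_nth mult_mat_nth)
    finally have c: "(mat s - Aa) ** P + P ** cadj (mat s - Ab) = 0 - (Aa ** P + P ** cadj Ab)" by simp
    have "N = 0 - (Aa ** P + P ** cadj Ab)" unfolding eq_diff_eq using eq by (simp add: add.commute)
    then show ?thesis using c by simp
  qed
  have 1: "res Aa s ** (mat s - Aa) = mat 1" using res_props(2)[OF ha, of s] s by simp
  have 2: "cadj (mat s - Ab) ** cadj (res Ab s) = mat 1"
    using res_props(2)[OF hb, of s] s by (simp add: cadj_mult[symmetric] cadj_mat)
  show ?thesis unfolding N using sandwich[OF 1 2] .
qed


lemma norm_le_sum_vec: "norm (x::'a::real_normed_vector^'n) \<le> (\<Sum>i\<in>UNIV. norm (x$i))"
  unfolding norm_vec_def by (rule L2_set_le_sum) simp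

lemma norm_le_sum_mat: "norm (M::complex^'n^'m) \<le> (\<Sum>i\<in>UNIV. \<Sum>j\<in>UNIV. cmod (M$i$j))"
proof -
  have "norm M \<le> (\<Sum>i\<in>UNIV. norm (M$i))" by (rule norm_le_sum_vec)
  also have "\<dots> \<le> (\<Sum>i\<in>UNIV. \<Sum>j\<in>UNIV. cmod (M$i$j))"
    by (intro sum_mono) (metis norm_le_sum_vec)
  finally show ?thesis .
qed

lemma entry_le_norm: "cmod ((M::complex^'n^'m)$i$j) \<le> norm M"
proof -
  have "norm ((M$i)$j) \<le> norm (M$i)" by (rule Finite_Cartesian_Product.norm_nth_le)
  also have "norm (M$i) \<le> norm M" by (rule Finite_Cartesian_Product.norm_nth_le)
  finally show ?thesis by simp
qed

lemma norm_smult_vec: "norm ((c::complex) *s (x::complex^'n)) = cmod c * norm x"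
  unfolding norm_vec_def by (simp add: L2_set_right_distrib norm_mult)

lemma norm_mv: "norm ((M::complex^'n^'m) *v x) \<le> real (CARD('m) * CARD('n)) * norm M * norm x"
proof -
  have "norm (M *v x) \<le> (\<Sum>i\<in>(UNIV::'m set). norm ((M *v x)$i))" by (rule norm_le_sum_vec)
  also have "\<dots> \<le> (\<Sum>i\<in>(UNIV::'m set). real CARD('n) * (norm M * norm x))"
  proof (intro sum_mono)
    fix i
    have "norm ((M *v x)$i) = norm (\<Sum>j\<in>UNIV. M$i$j * x$j)" by (simp add: matrix_vector_mult_def)
    also have "\<dots> \<le> (\<Sum>j\<in>(UNIV::'n set). norm (M$i$j * x$j))" by (rule norm_sum)
    also have "\<dots> \<le> (\<Sum>j\<in>(UNIV::'n set). norm M * norm x)"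
    proof (intro sum_mono)
      fix j
      have "norm (x$j) \<le> norm x" by (rule Finite_Cartesian_Product.norm_nth_le)
      then show "norm (M$i$j * x$j) \<le> norm M * norm x"
        by (simp add: norm_mult mult_mono entry_le_norm)
    qed
    finally show "norm ((M *v x)$i) \<le> real CARD('n) * (norm M * norm x)" by simp
  qed
  finally show ?thesis by simp
qed

lemma norm_mm: "norm ((A::complex^'n^'m) ** (B::complex^'p^'n))
   \<le> real (CARD('m) * CARD('p) * CARD('n)) * norm A * norm B"
proof -
  have "norm (A ** B) \<le> (\<Sum>i\<in>UNIV. \<Sum>j\<in>UNIV. cmod ((A ** B)$i$j))" by (rule norm_le_sum_mat)
  also have "\<dots> \<le> (\<Sum>i\<in>(UNIV::'m set). \<Sum>j\<in>(UNIV::'p set). real CARD('n) * (norm A * norm B))"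
  proof (intro sum_mono)
    fix i j
    have "cmod ((A ** B)$i$j) = norm (\<Sum>k\<in>UNIV. A$i$k * B$k$j)" by (simp add: matrix_matrix_mult_def)
    also have "\<dots> \<le> (\<Sum>k\<in>(UNIV::'n set). norm (A$i$k * B$k$j))" by (rule norm_sum)
    also have "\<dots> \<le> (\<Sum>k\<in>(UNIV::'n set). norm A * norm B)"
      by (intro sum_mono) (simp add: norm_mult mult_mono entry_le_norm)
    finally show "cmod ((A ** B)$i$j) \<le> real CARD('n) * (norm A * norm B)" by simp
  qed
  finally show ?thesis by (simp add: algebra_simps)
qed

lemma mv_axis_nth: "((M::complex^'n^'m) *v axis j 1) $ k = M $ k $ j"
  by (simp add: matrix_vector_mult_def axis_def if_distrib if_distribR sum.delta' cong: if_cong)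

lemma mat_mv: "(mat z :: complex^'n^'n) *v v = z *s v"
  by (simp add: vec_eq_iff matrix_vector_mult_def mat_def if_distrib if_distribR sum.delta cong: if_cong)




definition hol_mat :: "(complex \<Rightarrow> complex^'n^'m) \<Rightarrow> bool" where
  "hol_mat F \<longleftrightarrow> (\<exists>S. open S \<and> {z. 0 \<le> Re z} \<subseteq> S \<and> (\<forall>i j. (\<lambda>z. F z $ i $ j) holomorphic_on S))"

lemma hol_mat_const: "hol_mat (\<lambda>z. X)"
  unfolding hol_mat_def by (rule exI[of _ UNIV]) auto

lemma hol_mat_mult:
  fixes F :: "complex \<Rightarrow> complex^'n^'m" and G :: "complex \<Rightarrow> complex^'p^'n"
  assumes "hol_mat F" "hol_mat G"
  shows "hol_mat (\<lambda>z. F z ** G z)"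
proof -
  obtain S where S: "open S" "{z. 0 \<le> Re z} \<subseteq> S" "\<And>i j. (\<lambda>z. F z $ i $ j) holomorphic_on S"
    using assms(1) unfolding hol_mat_def by blast
  obtain S' where S': "open S'" "{z. 0 \<le> Re z} \<subseteq> S'" "\<And>i j. (\<lambda>z. G z $ i $ j) holomorphic_on S'"
    using assms(2) unfolding hol_mat_def by blast
  show ?thesis unfolding hol_mat_def
  proof (intro exI[of _ "S \<inter> S'"] conjI allI)
    fix i j
    show "(\<lambda>z. (F z ** G z) $ i $ j) holomorphic_on S \<inter> S'"
      unfolding matrix_matrix_mult_def
      by (simp, intro holomorphic_intros holomorphic_on_subset[OF S(3)] holomorphic_on_subset[OF S'(3)]) auto
  qed (use S S' in auto)
qed

lemma det_holomorphic:
  fixes F :: "complex \<Rightarrow> complex^'n^'n"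
  assumes "\<And>i j. (\<lambda>z. F z $ i $ j) holomorphic_on S"
  shows "(\<lambda>z. det (F z)) holomorphic_on S"
  unfolding det_def by (intro holomorphic_intros assms)

lemma hol_mat_res:
  assumes h: "hurwitz A"
  shows "hol_mat (res A)"
proof -
  define S where "S = {z. det (mat z - A) \<noteq> 0}"
  have hm: "(\<lambda>z. (mat z - A) $ i $ j) holomorphic_on UNIV" for i j
    by (cases "i = j") (simp_all add: mat_def, auto intro!: holomorphic_intros)
  have dh: "(\<lambda>z. det (mat z - A)) holomorphic_on UNIV" by (rule det_holomorphic[OF hm])
  have "open S"
  proof -
    have "continuous_on UNIV (\<lambda>z. det (mat z - A))" using dh holomorphic_on_imp_continuous_on by blast
    then show ?thesis unfolding S_def by (rule open_Collect_neq) simp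
  qed
  moreover have "{z. 0 \<le> Re z} \<subseteq> S"
    using hurwitz_invertible[OF h] invertible_det_nz by (auto simp: S_def)
  moreover have "(\<lambda>z. res A z $ k $ j) holomorphic_on S" for k j
  proof -
    define D where "D z = (\<chi> i l. if l = k then axis j 1 $ i else (mat z - A) $ i $ l)" for z
    have "(\<lambda>z. det (D z) / det (mat z - A)) holomorphic_on S"
    proof (intro holomorphic_intros)
      show "(\<lambda>z. det (D z)) holomorphic_on S"
      proof (rule det_holomorphic)
        fix i l
        show "(\<lambda>z. D z $ i $ l) holomorphic_on S"
          using holomorphic_on_subset[OF hm[of i l], of S]
          by (cases "l = k") (simp_all add: D_def)
      qed
      show "(\<lambda>z. det (mat z - A)) holomorphic_on S" using dh holomorphic_on_subset by blast
    qed (auto simp: S_def)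
    moreover have "res A z $ k $ j = det (D z) / det (mat z - A)" if "z \<in> S" for z
    proof -
      have d0: "det (mat z - A) \<noteq> 0" using that by (simp add: S_def)
      then have inv: "invertible (mat z - A)" using invertible_det_nz by blast
      have "(mat z - A) *v (res A z *v axis j 1) = axis j 1"
        using inv_props(1)[OF inv] by (simp add: res_def matrix_vector_mul_assoc)
      then have "res A z *v axis j 1 = (\<chi> k. det (\<chi> i l. if l = k then axis j 1 $ i else (mat z - A) $ i $ l) / det (mat z - A))"
        using cramer[OF d0] by blast
      then have "(res A z *v axis j 1) $ k = det (D z) / det (mat z - A)"
        by (simp add: D_def)
      then show ?thesis by (simp add: mv_axis_nth)
    qed
    ultimately show ?thesis by (metis (no_types, lifting) holomorphic_transform)
  qed
  ultimately show ?thesis unfolding hol_mat_def by blast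
qed

lemma hol_mat_cont:
  fixes F :: "complex \<Rightarrow> complex^'n^'m"
  assumes "hol_mat F"
  shows "continuous_on {z. 0 \<le> Re z} (\<lambda>z. F z $ i $ j)"
    "\<And>z. 0 < Re z \<Longrightarrow> (\<lambda>z. F z $ i $ j) field_differentiable at z"
proof -
  obtain S where S: "open S" "{z. 0 \<le> Re z} \<subseteq> S" "\<And>i j. (\<lambda>z. F z $ i $ j) holomorphic_on S"
    using assms(1) unfolding hol_mat_def by blast
  show "continuous_on {z. 0 \<le> Re z} (\<lambda>z. F z $ i $ j)"
    using S holomorphic_on_imp_continuous_on holomorphic_on_subset by blast
  fix z assume z: "0 < Re z"
  show "(\<lambda>z. F z $ i $ j) field_differentiable at z"
  proof (rule holomorphic_on_imp_differentiable_at[OF S(3) S(1)])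
    show "z \<in> S" using S(2) z by auto
  qed
qed

lemma mat_continuous_on:
  fixes F :: "'a::topological_space \<Rightarrow> complex^'n^'m"
  assumes "\<And>i j. continuous_on S (\<lambda>x. F x $ i $ j)"
  shows "continuous_on S F"
proof -
  have "continuous_on S (\<lambda>x. \<chi> i. \<chi> j. F x $ i $ j)"
    by (intro continuous_on_vec_lambda assms)
  then show ?thesis by simp
qed

lemma hol_mat_cont_mat: "hol_mat (F::complex \<Rightarrow> complex^'n^'m) \<Longrightarrow> continuous_on {z. 0 \<le> Re z} F"
  by (intro mat_continuous_on hol_mat_cont)

lemma bounded_linear_entry: "bounded_linear (\<lambda>M::complex^'n^'m. M $ i $ j)"
  using bounded_linear_compose[OF bounded_linear_vec_nth[of j] bounded_linear_vec_nth[of i]] by (simp add: o_def)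

lemma core_mat:
  fixes F :: "complex \<Rightarrow> complex^'n^'m"
  assumes F: "hol_mat F" and bnd: "\<And>z. 0 \<le> Re z \<Longrightarrow> norm (F z) * (cmod z)^2 \<le> M"
  shows "((\<lambda>T. integral {-T..T} (\<lambda>t. F (\<i> * of_real t))) \<longlongrightarrow> 0) at_top"
proof (rule vec_tendstoI, rule vec_tendstoI)
  fix i j
  have cF: "continuous_on UNIV (\<lambda>t. F (\<i> * of_real t))"
    by (rule continuous_on_compose2[OF hol_mat_cont_mat[OF F]]) (auto intro!: continuous_intros)
  have "((\<lambda>T. integral {-T..T} (\<lambda>t. F (\<i> * of_real t) $ i $ j)) \<longlongrightarrow> 0) at_top"
  proof (rule core_scalar[where M=M])
    show "continuous_on {z. 0 \<le> Re z} (\<lambda>z. F z $ i $ j)" by (rule hol_mat_cont(1)[OF F])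
    show "\<And>z. 0 < Re z \<Longrightarrow> (\<lambda>z. F z $ i $ j) field_differentiable at z" by (rule hol_mat_cont(2)[OF F])
    fix z assume "0 \<le> Re z"
    then show "cmod (F z $ i $ j) * (cmod z)^2 \<le> M"
      using bnd[of z] entry_le_norm[of "F z" i j] by (meson mult_right_mono order_trans zero_le_power2)
  qed
  moreover have "integral {-T..T} (\<lambda>t. F (\<i> * of_real t) $ i $ j) = integral {-T..T} (\<lambda>t. F (\<i> * of_real t)) $ i $ j" for T
  proof -
    have "(\<lambda>t. F (\<i> * of_real t)) integrable_on {-T..T}"
      by (rule integrable_continuous_interval) (rule continuous_on_subset[OF cF], auto)
    from integral_linear[OF this bounded_linear_entry] show ?thesis by (simp add: o_def)
  qed
  ultimately show "((\<lambda>T. integral {-T..T} (\<lambda>t. F (\<i> * of_real t)) $ i $ j) \<longlongrightarrow> 0 $ i $ j) at_top"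
    by simp
qed




lemma norm_axis_c: "norm (axis j (1::complex) :: complex^'n) = 1"
  by (simp add: norm_vec_def L2_set_def axis_def if_distrib if_distribR sum.delta' cong: if_cong)

lemma res_far:
  fixes A :: "complex^'n^'n"
  assumes h: "hurwitz A" and z: "0 \<le> Re z" and zb: "2 * real (CARD('n) * CARD('n)) * norm A \<le> cmod z" "z \<noteq> 0"
  shows "norm (res A z) * cmod z \<le> 2 * real (CARD('n) * CARD('n))"
proof -
  define \<kappa> where "\<kappa> = real (CARD('n) * CARD('n))"
  have low: "cmod z / 2 * norm x \<le> norm ((mat z - A) *v x)" for x :: "complex^'n"
  proof -
    have "(mat z - A) *v x = z *s x - A *v x" by (simp add: matrix_vector_mult_diff_rdistrib mat_mv)
    then have "norm ((mat z - A) *v x) \<ge> cmod z * norm x - norm (A *v x)"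
      using norm_triangle_ineq2[of "z *s x" "A *v x"] by (simp add: norm_smult_vec)
    moreover have "norm (A *v x) \<le> \<kappa> * norm A * norm x" using norm_mv[of A x] by (simp add: \<kappa>_def)
    moreover have "\<kappa> * norm A * norm x \<le> cmod z / 2 * norm x"
      using zb(1) by (intro mult_right_mono) (auto simp: \<kappa>_def)
    ultimately show ?thesis by (simp add: algebra_simps)
  qed
  have ent: "cmod (res A z $ k $ j) \<le> 2 / cmod z" for k j
  proof -
    define y where "y = res A z *v axis j 1"
    have "(mat z - A) *v y = axis j 1"
      using res_props(1)[OF h z] by (simp add: y_def matrix_vector_mul_assoc)
    then have "cmod z / 2 * norm y \<le> 1" using low[of y] by (simp add: norm_axis_c)
    then have "norm y \<le> 2 / cmod z" using zb(2) by (simp add: field_simps)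
    moreover have "cmod (res A z $ k $ j) = norm (y $ k)" by (simp add: y_def mv_axis_nth)
    moreover have "norm (y $ k) \<le> norm y" by (rule Finite_Cartesian_Product.norm_nth_le)
    ultimately show ?thesis by linarith
  qed
  have "norm (res A z) \<le> (\<Sum>i\<in>(UNIV::'n set). \<Sum>j\<in>(UNIV::'n set). 2 / cmod z)"
    using norm_le_sum_mat[of "res A z"] ent
    by (meson order_trans sum_mono)
  then have "norm (res A z) \<le> \<kappa> * (2 / cmod z)" by (simp add: \<kappa>_def)
  then have "norm (res A z) * cmod z \<le> \<kappa> * (2 / cmod z) * cmod z"
    by (rule mult_right_mono) simp_all
  also have "\<dots> = 2 * \<kappa>" using zb(2) by simp
  finally show ?thesis by (simp add: \<kappa>_def)
qed

lemma res_bound: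
  fixes A :: "complex^'n^'n"
  assumes h: "hurwitz A"
  shows "\<exists>K. \<forall>z. 0 \<le> Re z \<longrightarrow> norm (res A z) * (1 + cmod z) \<le> K"
proof -
  define \<kappa> where "\<kappa> = real (CARD('n) * CARD('n))"
  define \<rho> where "\<rho> = 2 * \<kappa> * norm A + 1"
  have \<rho>1: "\<rho> \<ge> 1" unfolding \<rho>_def \<kappa>_def by simp
  define C where "C = {z. 0 \<le> Re z} \<inter> cball 0 \<rho>"
  have "compact C" unfolding C_def
    by (intro closed_Int_compact closed_halfspace_Re_ge compact_cball)
  moreover have "continuous_on C (\<lambda>z. norm (res A z))"
    by (intro continuous_intros continuous_on_subset[OF hol_mat_cont_mat[OF hol_mat_res[OF h]]])
       (auto simp: C_def)
  ultimately have "compact ((\<lambda>z. norm (res A z)) ` C)" by (metis compact_continuous_image)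
  then obtain B where B: "\<And>z. z \<in> C \<Longrightarrow> norm (res A z) \<le> B"
    using compact_imp_bounded bounded_real by (metis (no_types, lifting) image_eqI abs_le_D1)
  show ?thesis
  proof (intro exI[of _ "max (B * (1 + \<rho>)) (4 * \<kappa>)"] allI impI)
    fix z assume z: "0 \<le> Re z"
    show "norm (res A z) * (1 + cmod z) \<le> max (B * (1 + \<rho>)) (4 * \<kappa>)"
    proof (cases "cmod z \<le> \<rho>")
      case True
      then have "norm (res A z) \<le> B" using B z by (auto simp: C_def)
      moreover have "0 \<le> norm (res A z)" by simp
      ultimately have "norm (res A z) * (1 + cmod z) \<le> B * (1 + \<rho>)"
        using True norm_ge_zero[of z] by (intro mult_mono) linarith+
      then show ?thesis by simp
    next
      case False
      then have zb: "2 * \<kappa> * norm A \<le> cmod z" "z \<noteq> 0" "1 \<le> cmod z"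
        using \<rho>1 by (auto simp: \<rho>_def)
      have f: "norm (res A z) * cmod z \<le> 2 * \<kappa>"
        using res_far[OF h z] zb by (simp add: \<kappa>_def)
      have "norm (res A z) * (1 + cmod z) \<le> norm (res A z) * (cmod z + cmod z)"
        using zb(3) by (intro mult_left_mono) auto
      also have "\<dots> = 2 * (norm (res A z) * cmod z)" by (simp add: algebra_simps)
      also have "\<dots> \<le> 4 * \<kappa>" using f by linarith
      finally show ?thesis by simp
    qed
  qed
qed




definition dec :: "'a::real_normed_vector set \<Rightarrow> nat \<Rightarrow> ('a \<Rightarrow> complex^'n^'m) \<Rightarrow> bool" where
  "dec S k F \<longleftrightarrow> (\<exists>M. \<forall>x\<in>S. norm (F x) * (1 + norm x)^k \<le> M)"

lemma dec_const: "dec S 0 (\<lambda>x. X)"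
  unfolding dec_def by auto

lemma dec_mult:
  fixes F :: "'a::real_normed_vector \<Rightarrow> complex^'n^'m" and G :: "'a \<Rightarrow> complex^'p^'n"
  assumes "dec S k F" "dec S l G"
  shows "dec S (k + l) (\<lambda>x. F x ** G x)"
proof -
  obtain M1 where M1: "\<And>x. x \<in> S \<Longrightarrow> norm (F x) * (1 + norm x)^k \<le> M1" using assms(1) unfolding dec_def by blast
  obtain M2 where M2: "\<And>x. x \<in> S \<Longrightarrow> norm (G x) * (1 + norm x)^l \<le> M2" using assms(2) unfolding dec_def by blast
  define c where "c = real (CARD('m) * CARD('p) * CARD('n))"
  show ?thesis unfolding dec_def
  proof (intro exI[of _ "c * M1 * M2"] ballI)
    fix x assume x: "x \<in> S"
    have p: "0 \<le> (1 + norm x)^k" "0 \<le> (1 + norm x)^l" by simp_all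
    have m1: "0 \<le> M1" using M1[OF x] p(1) by (meson mult_nonneg_nonneg norm_ge_zero order_trans)
    have c0: "0 \<le> c" by (simp add: c_def)
    have "norm (F x ** G x) * (1 + norm x)^(k+l) \<le> c * norm (F x) * norm (G x) * ((1 + norm x)^k * (1 + norm x)^l)"
      using norm_mm[of "F x" "G x"] by (simp add: power_add c_def mult_right_mono)
    also have "\<dots> = c * (norm (F x) * (1 + norm x)^k) * (norm (G x) * (1 + norm x)^l)"
      by (simp add: algebra_simps)
    also have "\<dots> \<le> c * M1 * M2"
      using M1[OF x] M2[OF x] p m1 c0 by (intro mult_mono) auto
    finally show "norm (F x ** G x) * (1 + norm x)^(k+l) \<le> c * M1 * M2" .
  qed
qed

lemma dec_mono:
  assumes "dec S k F" "l \<le> k"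
  shows "dec S l F"
proof -
  obtain M where M: "\<And>x. x \<in> S \<Longrightarrow> norm (F x) * (1 + norm x)^k \<le> M" using assms(1) unfolding dec_def by blast
  show ?thesis unfolding dec_def
  proof (intro exI[of _ M] ballI)
    fix x assume x: "x \<in> S"
    have "norm (F x) * (1 + norm x)^l \<le> norm (F x) * (1 + norm x)^k"
      by (intro mult_left_mono power_increasing assms(2)) auto
    then show "norm (F x) * (1 + norm x)^l \<le> M" using M[OF x] by linarith
  qed
qed

lemma dec_res: "hurwitz A \<Longrightarrow> dec {z. 0 \<le> Re z} 1 (res A)"
  using res_bound[of A] unfolding dec_def by auto

lemma dec_res_line: "hurwitz A \<Longrightarrow> dec UNIV 1 (\<lambda>t::real. res A (\<i> * of_real t))"
proof -
  assume "hurwitz A"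
  then obtain K where K: "\<And>z. 0 \<le> Re z \<Longrightarrow> norm (res A z) * (1 + cmod z) \<le> K"
    using res_bound[of A] by blast
  show ?thesis unfolding dec_def
  proof (intro exI[of _ K] ballI)
    fix t :: real
    have "cmod (\<i> * of_real t) = norm t" by (simp add: norm_mult)
    then show "norm (res A (\<i> * of_real t)) * (1 + norm t)^1 \<le> K"
      using K[of "\<i> * of_real t"] by simp
  qed
qed

lemma dec_cadj: "dec S k F \<Longrightarrow> dec S k (\<lambda>x. cadj (F x))"
  unfolding dec_def by simp

definition symlim :: "(real \<Rightarrow> complex^'n^'m) \<Rightarrow> complex^'n^'m \<Rightarrow> bool" where
  "symlim f L \<longleftrightarrow> ((\<lambda>T. integral {-T..T} f) \<longlongrightarrow> L) at_top"

lemma cont_line: "hol_mat F \<Longrightarrow> continuous_on UNIV (\<lambda>t::real. F (\<i> * of_real t))"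
  by (rule continuous_on_compose2[OF hol_mat_cont_mat]) (auto intro!: continuous_intros)

lemma symlim_zero:
  fixes F :: "complex \<Rightarrow> complex^'n^'m"
  assumes "hol_mat F" "dec {z. 0 \<le> Re z} 2 F"
  shows "symlim (\<lambda>t. F (\<i> * of_real t)) 0"
proof -
  obtain M where M: "\<And>z. 0 \<le> Re z \<Longrightarrow> norm (F z) * (1 + cmod z)^2 \<le> M" using assms(2) unfolding dec_def by auto
  have "norm (F z) * (cmod z)^2 \<le> M" if "0 \<le> Re z" for z
  proof -
    have "norm (F z) * (cmod z)^2 \<le> norm (F z) * (1 + cmod z)^2"
      by (intro mult_left_mono power_mono) auto
    then show ?thesis using M[OF that] by linarith
  qed
  then show ?thesis unfolding symlim_def by (intro core_mat[OF assms(1)]) auto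
qed

lemma two_res_zero:
  assumes "hurwitz A" "hurwitz B"
  shows "symlim (\<lambda>t. res A (\<i> * of_real t) ** X ** res B (\<i> * of_real t)) 0"
proof (rule symlim_zero[of "\<lambda>z. res A z ** X ** res B z", simplified])
  show "hol_mat (\<lambda>z. res A z ** X ** res B z)"
    by (intro hol_mat_mult hol_mat_res hol_mat_const assms)
  have "dec {z. 0 \<le> Re z} ((1 + 0) + 1) (\<lambda>z. res A z ** X ** res B z)"
    by (intro dec_mult dec_res dec_const assms)
  then show "dec {z. 0 \<le> Re z} 2 (\<lambda>z. res A z ** X ** res B z)"
    by (simp add: numeral_2_eq_2)
qed

lemma three_res_zero:
  assumes "hurwitz A" "hurwitz B" "hurwitz C"
  shows "symlim (\<lambda>t. res A (\<i> * of_real t) ** X ** res B (\<i> * of_real t) ** Y ** res C (\<i> * of_real t)) 0"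
proof (rule symlim_zero[of "\<lambda>z. res A z ** X ** res B z ** Y ** res C z", simplified])
  show "hol_mat (\<lambda>z. res A z ** X ** res B z ** Y ** res C z)"
    by (intro hol_mat_mult hol_mat_res hol_mat_const assms)
  have "dec {z. 0 \<le> Re z} (((1 + 0) + 1) + 0 + 1) (\<lambda>z. res A z ** X ** res B z ** Y ** res C z)"
    by (intro dec_mult dec_res dec_const assms)
  then show "dec {z. 0 \<le> Re z} 2 (\<lambda>z. res A z ** X ** res B z ** Y ** res C z)"
    by (rule dec_mono) simp
qed




lemma cont_mm:
  fixes f :: "'a::topological_space \<Rightarrow> complex^'n^'m" and g :: "'a \<Rightarrow> complex^'p^'n"
  assumes "continuous_on S f" "continuous_on S g"
  shows "continuous_on S (\<lambda>x. f x ** g x)"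
proof (rule mat_continuous_on)
  fix i j
  have "\<And>i k. continuous_on S (\<lambda>x. f x $ i $ k)" "\<And>k j. continuous_on S (\<lambda>x. g x $ k $ j)"
    using assms by (auto intro!: continuous_on_component)
  then show "continuous_on S (\<lambda>x. (f x ** g x) $ i $ j)"
    unfolding matrix_matrix_mult_def by (simp, intro continuous_intros assms continuous_on_component)
qed

lemma cont_cadj: "continuous_on S f \<Longrightarrow> continuous_on S (\<lambda>x. cadj (f x))"
  using continuous_on_compose2[OF linear_continuous_on[OF bounded_linear_cadj], of S f UNIV]
  by auto

lemma bl_sandwich: "bounded_linear (\<lambda>M::complex^'n^'m. X ** M ** Y)"
proof -
  have "linear (\<lambda>M::complex^'n^'m. X ** M ** Y)"
  proof (rule linearI)
    fix M N :: "complex^'n^'m" and r :: real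
    show "X ** (M + N) ** Y = X ** M ** Y + X ** N ** Y"
      by (simp add: matrix_add_ldistrib mm_rdistrib)
    show "X ** (r *\<^sub>R M) ** Y = r *\<^sub>R (X ** M ** Y)"
      by (simp add: matrix_scalar_ac scalar_matrix_assoc)
  qed
  then show ?thesis using linear_conv_bounded_linear by blast
qed

lemma bl_mat: "bounded_linear (\<lambda>c::complex. mat c :: complex^'n^'n)"
proof -
  have "linear (\<lambda>c::complex. mat c :: complex^'n^'n)"
    by (rule linearI) (simp_all add: vec_eq_iff mat_def)
  then show ?thesis using linear_conv_bounded_linear by blast
qed

lemma symlim_add:
  assumes "continuous_on UNIV f" "continuous_on UNIV g" "symlim f a" "symlim g b"
  shows "symlim (\<lambda>t. f t + g t) (a + b)"
proof -
  have "integral {-T..T} (\<lambda>t. f t + g t) = integral {-T..T} f + integral {-T..T} g" for T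
    by (intro integral_add integrable_continuous_interval continuous_on_subset[OF assms(1)]
        continuous_on_subset[OF assms(2)]) auto
  then show ?thesis using assms(3,4) unfolding symlim_def by (simp add: tendsto_add)
qed

lemma symlim_lin:
  assumes "continuous_on UNIV f" "bounded_linear h" "symlim f a"
  shows "symlim (\<lambda>t. h (f t)) (h a)"
proof -
  have "integral {-T..T} (\<lambda>t. h (f t)) = h (integral {-T..T} f)" for T
    using integral_linear[OF integrable_continuous_interval[OF continuous_on_subset[OF assms(1)]] assms(2)]
    by (simp add: o_def)
  then show ?thesis using assms(3) bounded_linear.tendsto[OF assms(2)] unfolding symlim_def by simp
qed

lemma symlim_sandwich:
  "continuous_on UNIV f \<Longrightarrow> symlim f a \<Longrightarrow> symlim (\<lambda>t. X ** f t ** Y) (X ** a ** Y)"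
  using symlim_lin[OF _ bl_sandwich] by blast

lemma symlim_cadj:
  "continuous_on UNIV f \<Longrightarrow> symlim f a \<Longrightarrow> symlim (\<lambda>t. cadj (f t)) (cadj a)"
  using symlim_lin[OF _ bounded_linear_cadj] by blast

lemma scalar_int:
  assumes "0 \<le> T"
  shows "((\<lambda>t::real. 1 / (\<i> * of_real t + 1)) has_integral of_real (2 * arctan T)) {-T..T}"
proof -
  define F where "F t = complex_of_real (arctan t) - \<i> * complex_of_real (ln (1 + t^2) / 2)" for t
  have d: "(F has_vector_derivative (1 / (\<i> * of_real t + 1))) (at t within {-T..T})" for t
  proof -
    have pos: "0 < 1 + t^2" by (simp add: add_pos_nonneg)
    have d1: "(arctan has_real_derivative (1 / (1 + t^2))) (at t within {-T..T})"
      using DERIV_arctan[of t] by (simp add: divide_inverse has_field_derivative_at_within)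
    have d2: "((\<lambda>t. ln (1 + t^2) / 2) has_real_derivative (inverse (1 + t^2) * (2 * t) / 2)) (at t within {-T..T})"
    proof -
      have "((\<lambda>t. 1 + t^2) has_real_derivative (2 * t)) (at t within {-T..T})"
        by (auto intro!: derivative_eq_intros)
      from DERIV_chain2[OF DERIV_ln[OF pos] this] show ?thesis
        by (rule DERIV_cdivide)
    qed
    have "(F has_vector_derivative (of_real (1 / (1 + t^2)) - \<i> * of_real (inverse (1 + t^2) * (2 * t) / 2)))
        (at t within {-T..T})"
      unfolding F_def
      by (intro has_vector_derivative_diff has_vector_derivative_mult_right has_vector_derivative_of_real d1 d2)
    moreover have "of_real (1 / (1 + t^2)) - \<i> * of_real (inverse (1 + t^2) * (2 * t) / 2) = 1 / (\<i> * of_real t + 1)"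
    proof -
      have nz: "(1::complex) + of_real t ^ 2 \<noteq> 0"
      proof
        assume "(1::complex) + of_real t ^ 2 = 0"
        then have "(1 + t^2) = (0::real)" by (metis of_real_1 of_real_add of_real_eq_0_iff of_real_power)
        then show False by (smt (verit) zero_le_power2)
      qed
      have nz2: "\<i> * of_real t + 1 \<noteq> (0::complex)" by (simp add: complex_eq_iff)
      have e1: "of_real (1 / (1 + t^2)) - \<i> * of_real (inverse (1 + t^2) * (2 * t) / 2)
          = (1 - \<i> * of_real t) / (1 + (of_real t)^2 :: complex)"
      proof -
        have a: "complex_of_real (1/(1+t^2)) = 1/(1 + (of_real t)^2)" by simp
        have b: "complex_of_real (inverse (1+t^2) * (2*t)/2) = of_real t / (1 + (of_real t)^2)"
        proof -
          have "inverse (1+t^2)*(2*t)/2 = t/(1+t^2)" using pos by (simp add: field_simps)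
          then show ?thesis by (simp only: of_real_divide of_real_add of_real_1 of_real_power)
        qed
        show ?thesis unfolding a b by (metis diff_divide_distrib times_divide_eq_right)
      qed
      have e2: "(1 - \<i> * of_real t) / (1 + (of_real t)^2 :: complex) = 1 / (\<i> * of_real t + 1)"
      proof -
        have p: "(1 - \<i> * of_real t) * (\<i> * of_real t + 1) = 1 * (1 + (of_real t)^2 :: complex)"
          by (simp add: algebra_simps power2_eq_square)
        show ?thesis by (subst frac_eq_eq[OF nz nz2]) (rule p)
      qed
      show ?thesis using e1 e2 by simp
    qed
    ultimately show ?thesis by simp
  qed
  have "((\<lambda>t. 1 / (\<i> * of_real t + 1)) has_integral (F T - F (-T))) {-T..T}"
    by (rule fundamental_theorem_of_calculus) (use assms d in auto)
  moreover have "F T - F (-T) = of_real (2 * arctan T)"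
    by (simp add: F_def arctan_minus)
  ultimately show ?thesis by simp
qed




definition symc :: "(real \<Rightarrow> complex^'n^'m) \<Rightarrow> complex^'n^'m \<Rightarrow> bool" where
  "symc f L \<longleftrightarrow> continuous_on UNIV f \<and> symlim f L"

lemma symc_add: "symc f a \<Longrightarrow> symc g b \<Longrightarrow> symc (\<lambda>t. f t + g t) (a + b)"
  unfolding symc_def using symlim_add continuous_on_add by blast

lemma symc_sandwich: "symc f a \<Longrightarrow> symc (\<lambda>t. X ** f t ** Y) (X ** a ** Y)"
  unfolding symc_def using symlim_sandwich cont_mm[OF cont_mm[OF continuous_on_const] continuous_on_const]
  by blast

lemma symc_cadj: "symc f a \<Longrightarrow> symc (\<lambda>t. cadj (f t)) (cadj a)"
  unfolding symc_def using symlim_cadj cont_cadj by blast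

lemma hurwitz_m1: "hurwitz (- mat 1 :: complex^'n^'n)"
  unfolding hurwitz_def
proof (intro allI impI)
  fix \<mu> and v :: "complex^'n"
  assume a: "v \<noteq> 0 \<and> (- mat 1) *v v = \<mu> *s v"
  then obtain i where i: "v $ i \<noteq> 0" by (metis vec_eq_iff zero_index)
  have "((- mat 1) *v v) $ i = - v $ i"
    by (simp add: matrix_vector_mult_def mat_def if_distrib if_distribR sum.delta cong: if_cong)
  then have "- v $ i = \<mu> * v $ i" using a by simp
  then have "\<mu> = -1" using i by (metis mult_cancel_right mult_minus1 )
  then show "Re \<mu> < 0" by simp
qed

lemma mat_mult_mat: "(mat c :: complex^'n^'n) ** mat d = mat (c * d)"
  by (simp add: vec_eq_iff mat_mult_nth) (simp add: mat_def)

lemma res_m1: "0 \<le> Re z \<Longrightarrow> res (- mat 1 :: complex^'n^'n) z = mat (1 / (z + 1))"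
proof -
  assume z: "0 \<le> Re z"
  have z1: "z + 1 \<noteq> 0" using z by (auto simp: complex_eq_iff)
  have eqm: "mat z - (- mat 1) = (mat (z + 1) :: complex^'n^'n)" by (simp add: vec_eq_iff mat_def)
  have r: "res (- mat 1) z ** mat (z + 1) = (mat 1 :: complex^'n^'n)"
    by (subst eqm[symmetric]) (rule res_props(2)[OF hurwitz_m1 z])
  have "res (- mat 1 :: complex^'n^'n) z = res (- mat 1) z ** (mat (z + 1) ** mat (1 / (z + 1)))"
    using z1 by (simp add: mat_mult_mat)
  also have "\<dots> = mat (1 / (z + 1))" by (simp only: matrix_mul_assoc r matrix_mul_lid)
  finally show ?thesis .
qed

lemma res_decomp:
  assumes h: "hurwitz A" and z: "0 \<le> Re z"
  shows "res A z = res (- mat 1) z + res A z ** (A + mat 1) ** res (- mat 1) z"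
proof -
  have e1: "res A z ** (mat z - (- mat 1)) ** res (- mat 1) z = res A z"
    by (simp only: matrix_mul_assoc[symmetric] res_props(1)[OF hurwitz_m1 z] matrix_mul_rid)
  have e2: "res A z ** (mat z - A) ** res (- mat 1) z = res (- mat 1) z"
    by (simp only: res_props(2)[OF h z] matrix_mul_lid)
  have am: "A + mat 1 = (mat z - (- mat 1)) - (mat z - A)" by simp
  have "res A z ** (A + mat 1) ** res (- mat 1) z
     = res A z ** (mat z - (- mat 1)) ** res (- mat 1) z - res A z ** (mat z - A) ** res (- mat 1) z"
    by (subst am) (simp only: matrix_sub_ldistrib matrix_sub_rdistrib)
  also have "\<dots> = res A z - res (- mat 1) z" by (simp only: e1 e2)
  finally show ?thesis by simp
qed

lemma symc_res_m1: "symc (\<lambda>t. res (- mat 1 :: complex^'n^'n) (\<i> * of_real t)) (mat (of_real pi))"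
  unfolding symc_def symlim_def
proof
  show "continuous_on UNIV (\<lambda>t. res (- mat 1 :: complex^'n^'n) (\<i> * of_real t))"
    by (rule cont_line[OF hol_mat_res[OF hurwitz_m1]])
  have eq: "integral {-T..T} (\<lambda>t. res (- mat 1 :: complex^'n^'n) (\<i> * of_real t)) = mat (of_real (2 * arctan T))"
    if T: "0 \<le> T" for T
  proof -
    have "integral {-T..T} (\<lambda>t. res (- mat 1 :: complex^'n^'n) (\<i> * of_real t))
        = integral {-T..T} (\<lambda>t. mat (1 / (\<i> * of_real t + 1)))"
      by (intro integral_cong) (simp add: res_m1 add.commute)
    also have "\<dots> = mat (integral {-T..T} (\<lambda>t. 1 / (\<i> * of_real t + 1)))"
      using integral_linear[OF has_integral_integrable[OF scalar_int[OF T]] bl_mat]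
      by (simp add: o_def)
    also have "\<dots> = mat (of_real (2 * arctan T))"
      using integral_unique[OF scalar_int[OF T]] by simp
    finally show ?thesis .
  qed
  have "((\<lambda>T. mat (of_real (2 * arctan T)) :: complex^'n^'n) \<longlongrightarrow> mat (of_real (2 * (pi/2)))) at_top"
    by (intro bounded_linear.tendsto[OF bl_mat] tendsto_of_real tendsto_mult tendsto_const tendsto_arctan_at_top)
  then have "((\<lambda>T. mat (of_real (2 * arctan T)) :: complex^'n^'n) \<longlongrightarrow> mat (of_real pi)) at_top" by simp
  then show "((\<lambda>T. integral {-T..T} (\<lambda>t. res (- mat 1 :: complex^'n^'n) (\<i> * of_real t))) \<longlongrightarrow> mat (of_real pi)) at_top"
    by (rule Lim_transform_eventually) (rule eventually_mono[OF eventually_ge_at_top[of 0]], simp add: eq)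
qed

lemma symc_zero2:
  assumes "hurwitz A" "hurwitz B"
  shows "symc (\<lambda>t. res A (\<i> * of_real t) ** X ** res B (\<i> * of_real t)) 0"
  unfolding symc_def using two_res_zero[OF assms]
    cont_line[of "\<lambda>z. res A z ** X ** res B z", OF hol_mat_mult[OF hol_mat_mult[OF hol_mat_res[OF assms(1)] hol_mat_const] hol_mat_res[OF assms(2)]]]
  by simp

lemma symc_zero3:
  assumes "hurwitz A" "hurwitz B" "hurwitz C"
  shows "symc (\<lambda>t. res A (\<i> * of_real t) ** X ** res B (\<i> * of_real t) ** Y ** res C (\<i> * of_real t)) 0"
  unfolding symc_def using three_res_zero[OF assms]
    cont_line[of "\<lambda>z. res A z ** X ** res B z ** Y ** res C z", OF hol_mat_mult[OF hol_mat_mult[OF hol_mat_mult[OF hol_mat_mult[OF hol_mat_res[OF assms(1)] hol_mat_const] hol_mat_res[OF assms(2)]] hol_mat_const] hol_mat_res[OF assms(3)]]]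
  by simp

lemma symc_res:
  assumes h: "hurwitz A"
  shows "symc (\<lambda>t. res A (\<i> * of_real t)) (mat (of_real pi))"
proof -
  have "symc (\<lambda>t. res (- mat 1) (\<i> * of_real t) + res A (\<i> * of_real t) ** (A + mat 1) ** res (- mat 1) (\<i> * of_real t))
      (mat (of_real pi) + 0)"
    by (intro symc_add symc_res_m1 symc_zero2 h hurwitz_m1)
  moreover have "(\<lambda>t. res (- mat 1) (\<i> * of_real t) + res A (\<i> * of_real t) ** (A + mat 1) ** res (- mat 1) (\<i> * of_real t))
      = (\<lambda>t. res A (\<i> * of_real t))"
    by (rule ext, rule res_decomp[OF h, symmetric]) simp
  ultimately show ?thesis by simp
qed

lemma symc_resa:
  assumes h: "hurwitz A"
  shows "symc (\<lambda>t. cadj (res A (\<i> * of_real t))) (mat (of_real pi))"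
  using symc_cadj[OF symc_res[OF h]] by (simp add: cadj_mat)




lemma UNIV_lim:
  fixes f :: "real \<Rightarrow> complex^'n^'m"
  assumes "(f has_integral I) UNIV"
  shows "symlim f I"
  unfolding symlim_def
proof (rule tendstoI)
  fix e :: real assume e: "e > 0"
  obtain B where B: "B > 0" and H: "\<And>a b. ball 0 B \<subseteq> cbox a b \<Longrightarrow>
      norm (integral (cbox a b) (\<lambda>x. if x \<in> UNIV then f x else 0) - I) < e"
    using assms[unfolded has_integral_alt'] e by blast
  show "\<forall>\<^sub>F T in at_top. dist (integral {-T..T} f) I < e"
  proof (rule eventually_mono[OF eventually_ge_at_top[of B]])
    fix T assume T: "B \<le> T"
    have "ball 0 B \<subseteq> cbox (-T) T" using T by (auto simp: dist_real_def)
    from H[OF this] show "dist (integral {-T..T} f) I < e"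
      by (simp add: dist_norm)
  qed
qed

lemma int_UNIV:
  fixes f :: "real \<Rightarrow> complex^'n^'m"
  assumes c: "continuous_on UNIV f" and d: "dec UNIV 2 f"
  shows "f integrable_on UNIV"
proof -
  obtain M where M: "\<And>x. norm (f x) * (1 + norm x)^2 \<le> M" using d unfolding dec_def by auto
  have g1: "(\<lambda>x::real. inverse (1 + x^2)) integrable_on UNIV"
    using integrable_inverse_1_plus_square
    by (intro integrable_on_lborel) (simp add: set_integrable_def)
  have g: "(\<lambda>x::real. M * inverse (1 + x^2)) integrable_on UNIV"
    using integrable_on_cmult_left[OF g1] by simp
  show ?thesis
  proof (rule integrable_on_all_intervals_UNIV[OF _ _ g])
    show "\<And>a b. f integrable_on cbox a b"
      by (rule integrable_continuous[OF continuous_on_subset[OF c]]) auto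
    fix x :: real
    have p: "0 < 1 + x^2" by (simp add: add_pos_nonneg)
    have q: "1 + x^2 \<le> (1 + norm x)^2" by (simp add: power2_eq_square algebra_simps)
    have "norm (f x) * (1 + x^2) \<le> norm (f x) * (1 + norm x)^2"
      by (intro mult_left_mono q) simp
    then have "norm (f x) * (1 + x^2) \<le> M" using M[of x] by linarith
    then show "norm (f x) \<le> M * inverse (1 + x^2)" using p
      by (simp add: field_simps)
  qed
qed

lemma mat_ofr_r: "(X::complex^'n^'m) ** mat (complex_of_real r) = r *\<^sub>R X"
  unfolding vec_eq_iff by (simp add: mult_mat_nth scaleR_conv_of_real[where 'a=complex])

lemma mat_ofr_l: "mat (complex_of_real r) ** (X::complex^'n^'m) = r *\<^sub>R X"
  unfolding vec_eq_iff by (simp add: mat_mult_nth scaleR_conv_of_real[where 'a=complex])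

theorem lemmaB2:
  fixes A1 :: "complex^'n1^'n1" and B1 :: "complex^'m1^'n1" and C1 :: "complex^'n1^'p"
    and A2 :: "complex^'n2^'n2" and B2 :: "complex^'m^'n2" and C2 :: "complex^'n2^'p"
    and A3 :: "complex^'n3^'n3" and B3 :: "complex^'m^'n3" and C3 :: "complex^'n3^'q"
    and A4 :: "complex^'n4^'n4" and B4 :: "complex^'r^'n4" and C4 :: "complex^'n4^'q"
    and A5 :: "complex^'n5^'n5" and B5 :: "complex^'r^'n5" and C5 :: "complex^'n5^'p5"
    and Q12 :: "complex^'n2^'n1" and P23 :: "complex^'n3^'n2"
    and Q34 :: "complex^'n4^'n3" and P45 :: "complex^'n5^'n4"
    and Q14 :: "complex^'n4^'n1" and P25 :: "complex^'n5^'n2"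
  assumes "hurwitz A1" "hurwitz A2" "hurwitz A3" "hurwitz A4" "hurwitz A5"
    and "cadj A1 ** Q12 + Q12 ** A2 + cadj C1 ** C2 = 0"
    and "A2 ** P23 + P23 ** cadj A3 + B2 ** cadj B3 = 0"
    and "cadj A3 ** Q34 + Q34 ** A4 + cadj C3 ** C4 = 0"
    and "A4 ** P45 + P45 ** cadj A5 + B4 ** cadj B5 = 0"
    and "cadj A1 ** Q14 + Q14 ** A4 + Q12 ** P23 ** cadj C3 ** C4
           + cadj C1 ** C2 ** P23 ** Q34 = 0"
    and "A2 ** P25 + P25 ** cadj A5 + P23 ** cadj C3 ** C4 ** P45 = 0"
  shows "((\<lambda>l::real.
            cadj (tf C1 A1 B1 (\<i> * of_real l)) ** tf C2 A2 B2 (\<i> * of_real l)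
         ** cadj (tf C3 A3 B3 (\<i> * of_real l)) ** tf C4 A4 B4 (\<i> * of_real l)
         ** cadj (tf C5 A5 B5 (\<i> * of_real l)))
        has_integral ((2 * pi) *\<^sub>R (cadj B1 ** (Q12 ** P25 + Q14 ** P45) ** cadj C5))) UNIV"
  (is "(?f has_integral ?V) UNIV")
proof -
  note h = assms(1-5)
  define N1 where "N1 = cadj C1 ** C2"
  define N2 where "N2 = B2 ** cadj B3"
  define N3 where "N3 = cadj C3 ** C4"
  define N4 where "N4 = B4 ** cadj B5"
  let ?R1 = "\<lambda>t. res A1 (\<i> * of_real t)"
  let ?R2 = "\<lambda>t. res A2 (\<i> * of_real t)"
  let ?R3 = "\<lambda>t. res A3 (\<i> * of_real t)"
  let ?R4 = "\<lambda>t. res A4 (\<i> * of_real t)"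
  let ?R5 = "\<lambda>t. res A5 (\<i> * of_real t)"
  define G where "G t =
     cadj (?R1 t) ** N1 ** P23 ** cadj (?R3 t) ** Q34 ** N4 ** cadj (?R5 t) + cadj (?R1 t) ** Q14 ** N4 ** cadj (?R5 t)
   + Q14 ** P45 ** cadj (?R5 t) + Q14 ** ?R4 t ** P45 + Q12 ** ?R2 t ** P23 ** N3 ** ?R4 t ** P45
   + Q12 ** P25 ** cadj (?R5 t) + Q12 ** ?R2 t ** P25" for t
  have tfR: "\<And>C A B s. tf C A B s = C ** res A s ** B" by (simp add: tf_def res_def)
  have fR: "?f = (\<lambda>t. cadj (C1 ** ?R1 t ** B1) ** (C2 ** ?R2 t ** B2) ** cadj (C3 ** ?R3 t ** B3)
      ** (C4 ** ?R4 t ** B4) ** cadj (C5 ** ?R5 t ** B5))"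
    by (simp add: tfR)
  have pw: "?f t = cadj B1 ** G t ** cadj C5" for t
  proof -
    let ?s = "\<i> * complex_of_real t"
    have s: "Re ?s = 0" by simp
    have "?f t = cadj B1 ** (cadj (?R1 t) ** N1 ** ?R2 t ** N2 ** cadj (?R3 t) ** N3 ** ?R4 t ** N4 ** cadj (?R5 t)) ** cadj C5"
      by (simp add: tfR cadj_mult matrix_mul_assoc N1_def N2_def N3_def N4_def)
    also have "cadj (?R1 t) ** N1 ** ?R2 t ** N2 ** cadj (?R3 t) ** N3 ** ?R4 t ** N4 ** cadj (?R5 t) = G t"
      unfolding G_def
    proof (rule decomp)
      show "cadj (?R1 t) ** N1 ** ?R2 t = Q12 ** ?R2 t + cadj (?R1 t) ** Q12"
        unfolding N1_def by (rule ident_Q[OF h(1) h(2) s assms(6)])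
      show "?R2 t ** N2 ** cadj (?R3 t) = P23 ** cadj (?R3 t) + ?R2 t ** P23"
        unfolding N2_def by (rule ident_P[OF h(2) h(3) s assms(7)])
      show "cadj (?R3 t) ** N3 ** ?R4 t = Q34 ** ?R4 t + cadj (?R3 t) ** Q34"
        unfolding N3_def by (rule ident_Q[OF h(3) h(4) s assms(8)])
      show "?R4 t ** N4 ** cadj (?R5 t) = P45 ** cadj (?R5 t) + ?R4 t ** P45"
        unfolding N4_def by (rule ident_P[OF h(4) h(5) s assms(9)])
      have e14: "cadj A1 ** Q14 + Q14 ** A4 + (Q12 ** P23 ** N3 + N1 ** P23 ** Q34) = 0"
        using assms(10) by (simp add: N1_def N3_def matrix_mul_assoc add.assoc)
      show "cadj (?R1 t) ** (Q12 ** P23 ** N3 + N1 ** P23 ** Q34) ** ?R4 t = Q14 ** ?R4 t + cadj (?R1 t) ** Q14"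
        by (rule ident_Q[OF h(1) h(4) s e14])
      have e25: "A2 ** P25 + P25 ** cadj A5 + P23 ** N3 ** P45 = 0"
        using assms(11) by (simp add: N3_def matrix_mul_assoc)
      show "?R2 t ** (P23 ** N3 ** P45) ** cadj (?R5 t) = P25 ** cadj (?R5 t) + ?R2 t ** P25"
        by (rule ident_P[OF h(2) h(5) s e25])
    qed
    finally show ?thesis .
  qed
  have pi_: "complex_of_real pi = of_real pi" by simp
  define V0 where "V0 = cadj (0::complex^'n1^'n5) + cadj (0::complex^'n1^'n5)
      + (Q14 ** P45) ** mat (of_real pi) ** mat 1 + Q14 ** mat (of_real pi) ** P45
      + Q12 ** (0::complex^'n4^'n2) ** P45 + (Q12 ** P25) ** mat (of_real pi) ** mat 1
      + Q12 ** mat (of_real pi) ** P25"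
  have sG: "symc G V0"
  proof -
    have t1: "symc (\<lambda>t. cadj (?R5 t ** cadj (Q34 ** N4) ** ?R3 t ** cadj (N1 ** P23) ** ?R1 t)) (cadj 0)"
      by (intro symc_cadj symc_zero3 h)
    have t2: "symc (\<lambda>t. cadj (?R5 t ** cadj (Q14 ** N4) ** ?R1 t)) (cadj 0)"
      by (intro symc_cadj symc_zero2 h)
    have t3: "symc (\<lambda>t. (Q14 ** P45) ** cadj (?R5 t) ** mat 1) ((Q14 ** P45) ** mat (of_real pi) ** mat 1)"
      by (intro symc_sandwich symc_resa h)
    have t4: "symc (\<lambda>t. Q14 ** ?R4 t ** P45) (Q14 ** mat (of_real pi) ** P45)"
      by (intro symc_sandwich symc_res h)
    have t5: "symc (\<lambda>t. Q12 ** (?R2 t ** (P23 ** N3) ** ?R4 t) ** P45) (Q12 ** 0 ** P45)"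
      by (intro symc_sandwich symc_zero2 h)
    have t6: "symc (\<lambda>t. (Q12 ** P25) ** cadj (?R5 t) ** mat 1) ((Q12 ** P25) ** mat (of_real pi) ** mat 1)"
      by (intro symc_sandwich symc_resa h)
    have t7: "symc (\<lambda>t. Q12 ** ?R2 t ** P25) (Q12 ** mat (of_real pi) ** P25)"
      by (intro symc_sandwich symc_res h)
    have "symc (\<lambda>t. cadj (?R5 t ** cadj (Q34 ** N4) ** ?R3 t ** cadj (N1 ** P23) ** ?R1 t)
       + cadj (?R5 t ** cadj (Q14 ** N4) ** ?R1 t)
       + (Q14 ** P45) ** cadj (?R5 t) ** mat 1 + Q14 ** ?R4 t ** P45
       + Q12 ** (?R2 t ** (P23 ** N3) ** ?R4 t) ** P45
       + (Q12 ** P25) ** cadj (?R5 t) ** mat 1 + Q12 ** ?R2 t ** P25) V0"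
      unfolding V0_def by (intro symc_add t1 t2 t3 t4 t5 t6 t7)
    moreover have "(\<lambda>t. cadj (?R5 t ** cadj (Q34 ** N4) ** ?R3 t ** cadj (N1 ** P23) ** ?R1 t)
       + cadj (?R5 t ** cadj (Q14 ** N4) ** ?R1 t)
       + (Q14 ** P45) ** cadj (?R5 t) ** mat 1 + Q14 ** ?R4 t ** P45
       + Q12 ** (?R2 t ** (P23 ** N3) ** ?R4 t) ** P45
       + (Q12 ** P25) ** cadj (?R5 t) ** mat 1 + Q12 ** ?R2 t ** P25) = G"
      by (rule ext) (simp add: G_def cadj_mult matrix_mul_assoc)
    ultimately show ?thesis by simp
  qed
  have sF: "symc ?f (cadj B1 ** V0 ** cadj C5)"
  proof -
    have "symc (\<lambda>t. cadj B1 ** G t ** cadj C5) (cadj B1 ** V0 ** cadj C5)"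
      by (rule symc_sandwich[OF sG])
    moreover have "(\<lambda>t. cadj B1 ** G t ** cadj C5) = ?f" using pw by auto
    ultimately show ?thesis by simp
  qed
  have v1: "V0 = pi *\<^sub>R (Q14 ** P45) + pi *\<^sub>R (Q14 ** P45) + pi *\<^sub>R (Q12 ** P25) + pi *\<^sub>R (Q12 ** P25)"
    unfolding V0_def by (simp add: mat_ofr_r mat_ofr_l scalar_matrix_assoc[symmetric])
  have v2: "V0 = (2 * pi) *\<^sub>R (Q12 ** P25 + Q14 ** P45)"
    unfolding v1 vec_eq_iff by (simp add: scaleR_conv_of_real[where 'a=complex] algebra_simps)
  have V: "cadj B1 ** V0 ** cadj C5 = ?V"
    unfolding v2 by (simp add: matrix_scalar_ac scalar_matrix_assoc)
  have dF: "dec UNIV 2 ?f"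
  proof -
    have "dec UNIV ((((0 + 1 + 0) + (0 + 1 + 0)) + (0 + 1 + 0)) + (0 + 1 + 0) + (0 + 1 + 0))
      (\<lambda>t. cadj (C1 ** ?R1 t ** B1) ** (C2 ** ?R2 t ** B2) ** cadj (C3 ** ?R3 t ** B3)
      ** (C4 ** ?R4 t ** B4) ** cadj (C5 ** ?R5 t ** B5))"
      by (intro dec_mult dec_cadj dec_const dec_res_line h)
    then have "dec UNIV 5 ?f" by (simp add: fR numeral_eq_Suc)
    then show ?thesis by (rule dec_mono) simp
  qed
  have cF: "continuous_on UNIV ?f" using sF unfolding symc_def by blast
  have iF: "?f integrable_on UNIV" by (rule int_UNIV[OF cF dF])
  have "symlim ?f (integral UNIV ?f)" by (rule UNIV_lim[OF integrable_integral[OF iF]])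
  moreover have "symlim ?f ?V" using sF V unfolding symc_def by simp
  ultimately have "integral UNIV ?f = ?V"
    unfolding symlim_def using tendsto_unique[OF trivial_limit_at_top_linorder] by blast
  then show ?thesis using integrable_integral[OF iF] by simp
qed


end
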